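(* Let $f:\mathbb{R}^n\to\mathbb{R}$ be $r+1$ times continuously differentiable for some integer $r\ge1$, with $\nabla f$ Lipschitz continuous with constant $L$. Let $x^*$ satisfy $\nabla f(x^* )=0$, and write $\nabla^2 f(x^* )=\sum_{i=1}^n\lambda_i v_iv_i^T$ with $\{v_1,\dots,v_n\}$ orthonormal and \[ \lambda_1\ge\dots\ge\lambda_{n-p}\ge 0>\lambda_{n-p+1}\ge\dots\ge\lambda_n \] for some $1\le p<n$; suppose $\lambda_1>0$. Let $0<\alpha<4/\lambda_1$ and $\beta\in(\max(-1+\alpha\lambda_1/2,0),1)$, let \[ DG(x^*,x^* )=\begin{bmatrix}(1+\beta)I-\alpha\nabla^2 f(x^* ) & -\beta I\\ I & 0\end{bmatrix}\in\mathbb{R}^{2n\times 2n}, \] and let $E_{cs}\subseteq\mathbb{R}^{2n}$ be the invariant subspace of $DG(x^*,x^* )$ corresponding to its eigenvalues of magnitude less than or equal to $1$. Then for $w\in\mathbb{R}^n$, the vector $(w,w)\in\mathbb{R}^{2n}$ lies in $E_{cs}$ only if $w\in\operatorname{span}\{v_1,\dots,v_{n-p}\}$, i.e. the span of the eigenvectors of $\nabla^2 f(x^* )$ corresponding to its nonnegative eigenvalues.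
   Context: $DG(x^*,x^* )$ is the Jacobian at $(x^*,x^* )$ of the heavy-ball map $G(z_1,z_2)=(z_1-\alpha\nabla f(z_1)+\beta(z_1-z_2),\,z_1)$. $E_{cs}$ is the sum of the (generalized, real) eigenspaces of $DG(x^*,x^* )$ for eigenvalues of complex modulus at most $1$. *)

theory Defs
  imports "HOL-Analysis.Analysis"
begin

fun Ck :: "nat \<Rightarrow> (real^'n \<Rightarrow> real) \<Rightarrow> bool" where
  "Ck 0 g = continuous_on UNIV g"
| "Ck (Suc k) g = (\<exists>g'. (\<forall>x. (g has_derivative g' x) (at x)) \<and>
                        (\<forall>i. Ck k (\<lambda>x. g' x (axis i 1))))"

definition grad :: "(real^'n \<Rightarrow> real) \<Rightarrow> real^'n \<Rightarrow> real^'n" where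
  "grad f x = (\<chi> i. frechet_derivative f (at x) (axis i 1))"

definition hess :: "(real^'n \<Rightarrow> real) \<Rightarrow> real^'n \<Rightarrow> real^'n^'n" where
  "hess f x = (\<chi> i j. frechet_derivative (\<lambda>y. grad f y $ i) (at x) (axis j 1))"

definition outer :: "real^'n \<Rightarrow> real^'n \<Rightarrow> real^'n^'n" where
  "outer u v = (\<chi> a b. u $ a * v $ b)"

text \<open>Jacobian of the heavy-ball map at (x*,x*), on R^(n+n) indexed by 'n + 'n
  (Inl = first block, Inr = second block).\<close>
definition DG :: "real \<Rightarrow> real \<Rightarrow> real^'n^'n \<Rightarrow> real^('n + 'n)^('n + 'n)" where
  "DG \<alpha> \<beta> H = (\<chi> i j. case (i, j) of
      (Inl a, Inl b) \<Rightarrow> (1 + \<beta>) * (if a = b then 1 else 0) - \<alpha> * H $ a $ b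
    | (Inl a, Inr b) \<Rightarrow> - \<beta> * (if a = b then 1 else 0)
    | (Inr a, Inl b) \<Rightarrow> (if a = b then 1 else 0)
    | (Inr a, Inr b) \<Rightarrow> 0)"

definition dup :: "real^'n \<Rightarrow> real^('n + 'n)" where
  "dup w = (\<chi> i. case i of Inl a \<Rightarrow> w $ a | Inr a \<Rightarrow> w $ a)"

definition complexify_mat :: "real^'m^'m \<Rightarrow> complex^'m^'m" where
  "complexify_mat A = (\<chi> i j. complex_of_real (A $ i $ j))"

definition complexify_vec :: "real^'m \<Rightarrow> complex^'m" where
  "complexify_vec x = (\<chi> i. complex_of_real (x $ i))"

definition gen_eigenspace :: "complex^'m^'m \<Rightarrow> complex \<Rightarrow> (complex^'m) set" where
  "gen_eigenspace C \<mu> = {z. \<exists>k. ((\<lambda>y. C *v y - \<mu> *s y) ^^ k) z = 0}"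

text \<open>Center-stable subspace E_cs of a real matrix A: the real vectors lying in the sum of the
  generalized eigenspaces of A for eigenvalues of modulus \<le> 1 (this is the sum of the real
  generalized eigenspaces for those eigenvalues).\<close>
definition E_cs :: "real^'m^'m \<Rightarrow> (real^'m) set" where
  "E_cs A = {x. complexify_vec x \<in>
      span (\<Union>\<mu>\<in>{\<mu>. cmod \<mu> \<le> 1}. gen_eigenspace (complexify_mat A) \<mu>)}"

end

theory Submission
  imports Defs
begin


lemma sum_plus_univ:
  fixes g :: "'a::finite + 'b::finite \<Rightarrow> 'c::comm_monoid_add"
  shows "sum g UNIV = (\<Sum>a\<in>UNIV. g (Inl a)) + (\<Sum>b\<in>UNIV. g (Inr b))"
proof -
  have "sum g (UNIV <+> UNIV) = sum (g \<circ> Inl) UNIV + sum (g \<circ> Inr) UNIV"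
    by (rule sum.Plus) auto
  thus ?thesis by (simp add: comp_def)
qed

lemma DG_comp:
  "DG \<alpha> \<beta> H $ Inl a $ Inl b = (1 + \<beta>) * (if a = b then 1 else 0) - \<alpha> * H $ a $ b"
  "DG \<alpha> \<beta> H $ Inl a $ Inr b = - \<beta> * (if a = b then 1 else 0)"
  "DG \<alpha> \<beta> H $ Inr a $ Inl b = (if a = b then 1 else 0)"
  "DG \<alpha> \<beta> H $ Inr a $ Inr b = 0"
  unfolding DG_def by simp_all

lemma left_eig_DG:
  fixes H :: "real^'n^'n" and x :: "real^'n"
  assumes hx: "\<And>b. (\<Sum>a\<in>UNIV. x $ a * H $ a $ b) = l * x $ b"
    and mu: "\<mu>^2 = (1 + \<beta> - \<alpha> * l) * \<mu> - \<beta>"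
  defines "u \<equiv> (\<chi> k. case k of Inl a \<Rightarrow> \<mu> * x $ a | Inr a \<Rightarrow> - \<beta> * x $ a) :: real^('n+'n)"
  shows "(\<Sum>k\<in>UNIV. u $ k * DG \<alpha> \<beta> H $ k $ j) = \<mu> * u $ j"
proof -
  have uc: "u $ Inl a = \<mu> * x $ a" "u $ Inr a = - \<beta> * x $ a" for a
    unfolding u_def by simp_all
  show ?thesis
proof (cases j)
  case (Inl b)
  have "(\<Sum>k\<in>UNIV. u $ k * DG \<alpha> \<beta> H $ k $ j)
     = (\<Sum>a\<in>UNIV. \<mu> * x $ a * ((1 + \<beta>) * (if a = b then 1 else 0) - \<alpha> * H $ a $ b))
       + (\<Sum>a\<in>UNIV. - \<beta> * x $ a * (if a = b then 1 else 0))"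
    unfolding Inl by (subst sum_plus_univ) (simp only: uc DG_comp)
  also have "\<dots> = (\<Sum>a\<in>UNIV. (if a = b then \<mu> * (1 + \<beta>) * x $ b else 0) - \<mu> * \<alpha> * (x $ a * H $ a $ b))
       + (\<Sum>a\<in>UNIV. if a = b then - \<beta> * x $ b else 0)"
    by (intro arg_cong2[where f="(+)"] sum.cong) (auto simp: algebra_simps)
  also have "\<dots> = \<mu> * (1 + \<beta>) * x $ b - \<mu> * \<alpha> * (\<Sum>a\<in>UNIV. x $ a * H $ a $ b) - \<beta> * x $ b"
    by (simp add: sum_subtractf sum_distrib_left)
  also have "\<dots> = (\<mu> * (1 + \<beta>) - \<mu> * \<alpha> * l - \<beta>) * x $ b" by (simp add: hx algebra_simps)
  also have "\<mu> * (1 + \<beta>) - \<mu> * \<alpha> * l - \<beta> = \<mu> * \<mu>" using mu by (simp add: power2_eq_square algebra_simps)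
  also have "\<mu> * \<mu> * x $ b = \<mu> * u $ j" by (simp add: uc Inl)
  finally show ?thesis .
next
  case (Inr b)
  have "(\<Sum>k\<in>UNIV. u $ k * DG \<alpha> \<beta> H $ k $ j)
     = (\<Sum>a\<in>UNIV. \<mu> * x $ a * (- \<beta> * (if a = b then 1 else 0)))"
    unfolding Inr by (subst sum_plus_univ) (simp add: uc DG_comp)
  also have "\<dots> = (\<Sum>a\<in>UNIV. if a = b then \<mu> * (- \<beta> * x $ b) else 0)"
    by (rule sum.cong) auto
  also have "\<dots> = \<mu> * u $ j"
    by (simp add: uc Inr)
  finally show ?thesis .
qed
qed

lemma left_eig_complex:
  fixes A :: "real^'m^'m" and u :: "real^'m"
  assumes "\<And>j. (\<Sum>k\<in>UNIV. u $ k * A $ k $ j) = \<mu> * u $ j"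
  shows "(\<Sum>k\<in>UNIV. complex_of_real (u $ k) * (complexify_mat A *v z) $ k)
        = complex_of_real \<mu> * (\<Sum>k\<in>UNIV. complex_of_real (u $ k) * z $ k)"
proof -
  have "(\<Sum>k\<in>UNIV. complex_of_real (u $ k) * (complexify_mat A *v z) $ k)
       = (\<Sum>k\<in>UNIV. \<Sum>j\<in>UNIV. complex_of_real (u $ k) * complex_of_real (A $ k $ j) * z $ j)"
    by (simp add: matrix_vector_mult_def complexify_mat_def sum_distrib_left mult.assoc)
  also have "\<dots> = (\<Sum>j\<in>UNIV. \<Sum>k\<in>UNIV. complex_of_real (u $ k) * complex_of_real (A $ k $ j) * z $ j)"
    by (rule sum.swap)
  also have "\<dots> = (\<Sum>j\<in>UNIV. complex_of_real (\<Sum>k\<in>UNIV. u $ k * A $ k $ j) * z $ j)"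
    by (simp add: sum_distrib_right)
  also have "\<dots> = complex_of_real \<mu> * (\<Sum>k\<in>UNIV. complex_of_real (u $ k) * z $ k)"
    by (simp add: assms sum_distrib_left mult.assoc)
  finally show ?thesis .
qed

lemma kill_Ecs:
  fixes A :: "real^'m^'m" and u :: "real^'m"
  assumes le: "\<And>j. (\<Sum>k\<in>UNIV. u $ k * A $ k $ j) = \<mu> * u $ j"
    and mu: "\<mu> > 1"
    and x: "x \<in> E_cs A"
  shows "u \<bullet> x = 0"
proof -
  define l where "l z = (\<Sum>k\<in>UNIV. complex_of_real (u $ k) * z $ k)" for z :: "complex^'m"
  let ?C = "complexify_mat A"
  have lC: "l (?C *v z) = complex_of_real \<mu> * l z" for z
    unfolding l_def by (rule left_eig_complex[OF le])
  have lT: "l (?C *v z - m *s z) = (complex_of_real \<mu> - m) * l z" for z m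
  proof -
    have d: "l (a - b) = l a - l b" for a b
      unfolding l_def by (simp add: sum_subtractf right_diff_distrib)
    have s: "l (m *s b) = m * l b" for b
    proof -
      have "l (m *s b) = (\<Sum>k\<in>UNIV. m * (complex_of_real (u $ k) * b $ k))"
        unfolding l_def by (rule sum.cong) (auto simp: mult.left_commute)
      thus ?thesis unfolding l_def by (simp only: sum_distrib_left)
    qed
    show ?thesis by (simp only: d s lC left_diff_distrib)
  qed
  have gen: "l z = 0" if "z \<in> gen_eigenspace ?C m" "cmod m \<le> 1" for z m
  proof -
    from that obtain k where k: "((\<lambda>y. ?C *v y - m *s y) ^^ k) z = 0"
      unfolding gen_eigenspace_def by auto
    have it: "l (((\<lambda>y. ?C *v y - m *s y) ^^ j) z) = (complex_of_real \<mu> - m) ^ j * l z" for j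
      by (induction j) (simp_all add: lT)
    have "l 0 = 0" by (simp add: l_def)
    hence "(complex_of_real \<mu> - m) ^ k * l z = 0" using it[of k] k by simp
    moreover have "complex_of_real \<mu> \<noteq> m" 
    proof
      assume "complex_of_real \<mu> = m"
      hence "cmod m = \<bar>\<mu>\<bar>" by (metis norm_of_real)
      thus False using mu that(2) by simp
    qed
    ultimately show ?thesis by simp
  qed
  have sub: "subspace {z. l z = 0}"
  proof -
    have "(c *\<^sub>R z) $ k = complex_of_real c * z $ k" for c and z :: "complex^'m" and k
      by (subst vector_scaleR_component) (simp add: scaleR_conv_of_real)
    note h = this
    have "l (c *\<^sub>R z) = complex_of_real c * l z" for c z
    proof -
      have "l (c *\<^sub>R z) = (\<Sum>k\<in>UNIV. complex_of_real c * (complex_of_real (u $ k) * z $ k))"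
        unfolding l_def h by (rule sum.cong) auto
      thus ?thesis unfolding l_def by (simp only: sum_distrib_left)
    qed
    moreover have "l (z + y) = l z + l y" for z y
      unfolding l_def by (simp add: distrib_left sum.distrib)
    moreover have "l 0 = 0" unfolding l_def by simp
    ultimately show ?thesis
      unfolding subspace_def by simp
  qed
  have "span (\<Union>m\<in>{m. cmod m \<le> 1}. gen_eigenspace ?C m) \<subseteq> {z. l z = 0}"
    by (rule span_minimal[OF _ sub]) (auto intro: gen)
  hence "l (complexify_vec x) = 0" using x unfolding E_cs_def by auto
  moreover have "l (complexify_vec x) = complex_of_real (u \<bullet> x)"
  proof -
    have "l (complexify_vec x) = (\<Sum>k\<in>UNIV. complex_of_real (u $ k * x $ k))"
      unfolding l_def complexify_vec_def by simp
    also have "\<dots> = complex_of_real (\<Sum>k\<in>UNIV. u $ k * x $ k)" by (rule of_real_sum[symmetric])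
    finally show ?thesis by (simp add: inner_vec_def)
  qed
  ultimately show ?thesis by simp
qed

lemma hess_left:
  fixes v :: "nat \<Rightarrow> real^'n" and lam :: "nat \<Rightarrow> real"
  assumes orth: "\<forall>i\<in>{1..CARD('n)}. \<forall>j\<in>{1..CARD('n)}. v i \<bullet> v j = (if i = j then 1 else 0)"
    and i: "i \<in> {1..CARD('n)}"
  shows "(\<Sum>a\<in>UNIV. v i $ a * (\<Sum>j=1..CARD('n). lam j *\<^sub>R outer (v j) (v j)) $ a $ b) = lam i * v i $ b"
proof -
  have "(\<Sum>a\<in>UNIV. v i $ a * (\<Sum>j=1..CARD('n). lam j *\<^sub>R outer (v j) (v j)) $ a $ b)
     = (\<Sum>a\<in>UNIV. \<Sum>j=1..CARD('n). v i $ a * (lam j * (v j $ a * v j $ b)))"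
    by (simp add: outer_def sum_distrib_left)
  also have "\<dots> = (\<Sum>j=1..CARD('n). \<Sum>a\<in>UNIV. v i $ a * (lam j * (v j $ a * v j $ b)))"
    by (rule sum.swap)
  also have "\<dots> = (\<Sum>j=1..CARD('n). lam j * v j $ b * (v i \<bullet> v j))"
  proof (rule sum.cong[OF refl])
    fix j
    have "(\<Sum>a\<in>UNIV. v i $ a * (lam j * (v j $ a * v j $ b))) = (\<Sum>a\<in>UNIV. (lam j * v j $ b) * (v i $ a * v j $ a))"
      by (rule sum.cong) (auto simp: mult_ac)
    also have "\<dots> = lam j * v j $ b * (v i \<bullet> v j)"
      by (simp add: inner_vec_def sum_distrib_left)
    finally show "(\<Sum>a\<in>UNIV. v i $ a * (lam j * (v j $ a * v j $ b))) = lam j * v j $ b * (v i \<bullet> v j)" .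
  qed
  also have "\<dots> = (\<Sum>j=1..CARD('n). if j = i then lam i * v i $ b else 0)"
    using orth i by (intro sum.cong) auto
  also have "\<dots> = lam i * v i $ b" using i by simp
  finally show ?thesis .
qed


lemma mu_exists:
  fixes s \<beta> :: real
  assumes "s > 1 + \<beta>" "\<beta> < 1" "\<beta> > 0"
  shows "\<exists>\<mu>. \<mu>^2 = s * \<mu> - \<beta> \<and> \<mu> > 1"
proof -
  have "(1 + \<beta>)^2 < s^2" using assms by (intro power_strict_mono) auto
  hence d: "s^2 - 4 * \<beta> > (1 - \<beta>)^2" by (simp add: power2_eq_square algebra_simps)
  define q where "q = sqrt (s^2 - 4 * \<beta>)"
  have nn: "s^2 - 4 * \<beta> \<ge> 0" using d by (smt (verit) zero_le_power2)
  have q0: "q \<ge> 0" unfolding q_def using nn by simp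
  have qq: "q^2 = s^2 - 4 * \<beta>" unfolding q_def using nn by simp
  have "(s + q) / 2 > 1"
  proof (cases "s \<ge> 2")
    case True
    have "q > 0" using d q0 qq unfolding q_def by (smt (verit) real_sqrt_gt_zero zero_le_power2)
    thus ?thesis using True by simp
  next
    case False
    have "q^2 > (2 - s)^2" using qq assms by (simp add: power2_eq_square algebra_simps)
    hence "q > 2 - s" using q0 False by (smt (verit) power_mono)
    thus ?thesis by simp
  qed
  moreover have "((s + q) / 2)^2 = s * ((s + q) / 2) - \<beta>"
    using qq by (simp add: power2_eq_square field_simps)
  ultimately show ?thesis by blast
qed


theorem theorem2p7:
  fixes f :: "real^'n \<Rightarrow> real" and r :: nat and L :: real and xs :: "real^'n"
    and lam :: "nat \<Rightarrow> real" and v :: "nat \<Rightarrow> real^'n" and p :: nat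
    and \<alpha> \<beta> :: real and w :: "real^'n"
  assumes r: "r \<ge> 1"
    and smooth: "Ck (r + 1) f"
    and lip: "L-lipschitz_on UNIV (grad f)"
    and crit: "grad f xs = 0"
    and orth: "\<forall>i\<in>{1..CARD('n)}. \<forall>j\<in>{1..CARD('n)}. v i \<bullet> v j = (if i = j then 1 else 0)"
    and decomp: "hess f xs = (\<Sum>i=1..CARD('n). lam i *\<^sub>R outer (v i) (v i))"
    and p: "1 \<le> p" "p < CARD('n)"
    and sorted: "\<forall>i j. 1 \<le> i \<and> i \<le> j \<and> j \<le> CARD('n) \<longrightarrow> lam j \<le> lam i"
    and nonneg: "lam (CARD('n) - p) \<ge> 0"
    and neg: "lam (CARD('n) - p + 1) < 0"
    and lam1: "lam 1 > 0"
    and alpha: "0 < \<alpha>" "\<alpha> < 4 / lam 1"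
    and beta: "max (-1 + \<alpha> * lam 1 / 2) 0 < \<beta>" "\<beta> < 1"
    and inEcs: "dup w \<in> E_cs (DG \<alpha> \<beta> (hess f xs))"
  shows "w \<in> span (v ` {1..CARD('n) - p})"
  proof -
  define N where "N = CARD('n)"
  define H where "H = hess f xs"
  have Hd: "H = (\<Sum>i=1..N. lam i *\<^sub>R outer (v i) (v i))" using decomp unfolding H_def N_def .
  have vw0: "v i \<bullet> w = 0" if i: "i \<in> {N-p+1..N}" for i
  proof -
    have iN: "i \<in> {1..CARD('n)}" using i p unfolding N_def by auto
    have li: "lam i < 0" using sorted neg i unfolding N_def
      by (smt (verit) atLeastAtMost_iff le_add2 le_trans)
    define s where "s = 1 + \<beta> - \<alpha> * lam i"
    have "\<alpha> * lam i < 0" using alpha li by (simp add: mult_pos_neg)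
    hence "s > 1 + \<beta>" unfolding s_def by simp
    moreover have "\<beta> > 0" using beta by simp
    ultimately obtain \<mu> where mu: "\<mu>^2 = s * \<mu> - \<beta>" "\<mu> > 1"
      using mu_exists[of \<beta> s] beta by auto
    have hx: "(\<Sum>a\<in>UNIV. v i $ a * H $ a $ b) = lam i * v i $ b" for b
      unfolding Hd N_def by (rule hess_left[OF orth iN])
    define u :: "real^('n+'n)" where "u = (\<chi> k. case k of Inl a \<Rightarrow> \<mu> * v i $ a | Inr a \<Rightarrow> - \<beta> * v i $ a)"
    have le: "(\<Sum>k\<in>UNIV. u $ k * DG \<alpha> \<beta> H $ k $ j) = \<mu> * u $ j" for j
      unfolding u_def by (rule left_eig_DG[OF hx]) (use mu(1) in \<open>simp add: s_def\<close>)
    have "u \<bullet> dup w = 0"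
      by (rule kill_Ecs[OF le mu(2)]) (use inEcs in \<open>simp add: H_def\<close>)
    moreover have "u \<bullet> dup w = (\<mu> - \<beta>) * (v i \<bullet> w)"
    proof -
      have "u \<bullet> dup w = (\<Sum>k\<in>UNIV. u $ k * dup w $ k)" by (simp add: inner_vec_def)
      also have "\<dots> = (\<Sum>a\<in>UNIV. \<mu> * v i $ a * w $ a) + (\<Sum>a\<in>UNIV. - \<beta> * v i $ a * w $ a)"
        by (subst sum_plus_univ) (simp add: u_def dup_def)
      also have "\<dots> = (\<mu> - \<beta>) * (v i \<bullet> w)"
        by (simp add: inner_vec_def sum_distrib_left algebra_simps sum_subtractf sum.distrib sum_negf)
      finally show ?thesis .
    qed
    moreover have "\<mu> - \<beta> \<noteq> 0" using mu beta by simp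
    ultimately show ?thesis by simp
  qed
  define Vl where "Vl = v ` {1..N-p}"
  define Vh where "Vh = v ` {N-p+1..N}"
  have orthN: "\<forall>i\<in>{1..N}. \<forall>j\<in>{1..N}. v i \<bullet> v j = (if i = j then 1 else 0)"
    using orth unfolding N_def .
  have inj: "inj_on v {1..N}"
  proof (rule inj_onI)
    fix i j assume ij: "i \<in> {1..N}" "j \<in> {1..N}" "v i = v j"
    show "i = j"
    proof (rule ccontr)
      assume "i \<noteq> j"
      hence "v i \<bullet> v j = 0" using orthN ij(1,2) \<open>i \<noteq> j\<close> by simp
      moreover have "v i \<bullet> v i = 1" using orthN ij(1) by simp
      ultimately show False using ij by simp
    qed
  qed
  have "pairwise orthogonal (v ` {1..N})"
    unfolding pairwise_def orthogonal_def using orthN by auto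
  moreover have "0 \<notin> v ` {1..N}"
    using orthN by force
  ultimately have ind: "independent (v ` {1..N})" by (rule pairwise_orthogonal_independent)
  have "card (v ` {1..N}) = N" using inj by (simp add: card_image)
  hence "dim (UNIV :: (real^'n) set) \<le> card (v ` {1..N})" by (simp add: N_def)
  hence "UNIV \<subseteq> span (v ` {1..N})" using card_ge_dim_independent[OF _ ind] by blast
  moreover have "v ` {1..N} = Vl \<union> Vh"
  proof -
    have "{1..N} = {1..N-p} \<union> {N-p+1..N}" using p unfolding N_def by auto
    thus ?thesis unfolding Vl_def Vh_def by auto
  qed
  ultimately have "w \<in> span (Vl \<union> Vh)" by auto
  then obtain a b where ab: "w = a + b" "a \<in> span Vl" "b \<in> span Vh"
    unfolding span_Un by blast
  have "y \<bullet> b = 0" if y: "y \<in> Vh" for y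
  proof -
    have "orthogonal y a"
    proof (rule orthogonal_to_span[OF ab(2)])
      fix z assume "z \<in> Vl"
      thus "orthogonal y z" using y orthN p unfolding Vl_def Vh_def orthogonal_def by auto
    qed
    moreover have "y \<bullet> w = 0" using y vw0 unfolding Vh_def by auto
    ultimately show ?thesis using ab(1) by (simp add: orthogonal_def inner_add_right)
  qed
  hence "orthogonal b b"
    by (intro orthogonal_to_span[OF ab(3)]) (simp add: orthogonal_def inner_commute)
  hence "b = 0" by (simp add: orthogonal_def)
  thus ?thesis using ab unfolding Vl_def N_def by simp
qed

end
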